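(* For $i\in[m]$ let $N_i=\begin{pmatrix}a_i&b_i\\ -\infty&d_i\end{pmatrix}$ with $a_i,b_i,d_i\in\mathbb{R}$. Then $N_i\otimes N_j=N_j\otimes N_i$ for all $i,j\in[m]$ if and only if one of the following holds: (i) $a_i\ge d_i$ for all $i\in[m]$, and there is $c\in\mathbb{R}$ with $c=b_k-a_k$ for every $k$ with $a_k>d_k$ and $c\ge b_k-a_k$ for every $k$ with $a_k=d_k$; or (ii) $a_i\le d_i$ for all $i\in[m]$, and there is $c\in\mathbb{R}$ with $c=d_k-b_k$ for every $k$ with $a_k<d_k$ and $c\le d_k-b_k$ for every $k$ with $a_k=d_k$.
   Context: The max-plus algebra is $\mathbb{R}_{\max}=\mathbb{R}\cup\{-\infty\}$ with $a\oplus b=\max\{a,b\}$ and $a\otimes b=a+b$ (additive identity $-\infty$, multiplicative identity $0$). Matrix products are defined as in linear algebra with these operations: $(A\otimes B)_{jk}=\max_l(A_{jl}+B_{lk})$. *)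

theory Defs
  imports "HOL-Library.Extended_Real"
begin

text \<open>Max-plus algebra: elements are extended reals (only finite values and -infinity
are used). Matrices of size n are functions nat => nat => ereal, entries with
indices below n are meaningful.\<close>

definition mp_mult :: "nat \<Rightarrow> (nat \<Rightarrow> nat \<Rightarrow> ereal) \<Rightarrow> (nat \<Rightarrow> nat \<Rightarrow> ereal) \<Rightarrow> (nat \<Rightarrow> nat \<Rightarrow> ereal)"
  where "mp_mult n A B = (\<lambda>j k. Max ((\<lambda>l. A j l + B l k) ` {..<n}))"

definition upper2 :: "real \<Rightarrow> real \<Rightarrow> real \<Rightarrow> (nat \<Rightarrow> nat \<Rightarrow> ereal)"
  where "upper2 a b d = (\<lambda>j k.
     if j = 0 \<and> k = 0 then ereal a
     else if j = 0 \<and> k = 1 then ereal b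
     else if j = 1 \<and> k = 1 then ereal d
     else -\<infinity>)"

definition mp_eq :: "nat \<Rightarrow> (nat \<Rightarrow> nat \<Rightarrow> ereal) \<Rightarrow> (nat \<Rightarrow> nat \<Rightarrow> ereal) \<Rightarrow> bool"
  where "mp_eq n A B \<longleftrightarrow> (\<forall>j<n. \<forall>k<n. A j k = B j k)"

end

theory Submission
  imports Defs
begin
lemma entries:
  "mp_mult 2 (upper2 a1 b1 d1) (upper2 a2 b2 d2) 0 0 = ereal (a1+a2)"
  "mp_mult 2 (upper2 a1 b1 d1) (upper2 a2 b2 d2) 0 1 = ereal (max (a1+b2) (b1+d2))"
  "mp_mult 2 (upper2 a1 b1 d1) (upper2 a2 b2 d2) 1 0 = -\<infinity>"
  "mp_mult 2 (upper2 a1 b1 d1) (upper2 a2 b2 d2) 1 1 = ereal (d1+d2)"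
proof -
  have U: "{..<2::nat} = {0,1}" by auto
  have M: "Max {x, y} = max x y" for x y :: ereal by simp
  show "mp_mult 2 (upper2 a1 b1 d1) (upper2 a2 b2 d2) 0 0 = ereal (a1+a2)"
    unfolding mp_mult_def U image_insert image_empty M by (simp add: upper2_def)
  show "mp_mult 2 (upper2 a1 b1 d1) (upper2 a2 b2 d2) 0 1 = ereal (max (a1+b2) (b1+d2))"
    unfolding mp_mult_def U image_insert image_empty M by (simp add: upper2_def)
  show "mp_mult 2 (upper2 a1 b1 d1) (upper2 a2 b2 d2) 1 0 = -\<infinity>"
    unfolding mp_mult_def U image_insert image_empty M by (simp add: upper2_def)
  show "mp_mult 2 (upper2 a1 b1 d1) (upper2 a2 b2 d2) 1 1 = ereal (d1+d2)"
    unfolding mp_mult_def U image_insert image_empty M by (simp add: upper2_def)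
qed

lemma comm_iff: "mp_eq 2 (mp_mult 2 (upper2 a1 b1 d1) (upper2 a2 b2 d2)) (mp_mult 2 (upper2 a2 b2 d2) (upper2 a1 b1 d1))
   \<longleftrightarrow> max (a1+b2) (b1+d2) = max (a2+b1) (b2+d1)"
proof -
  have L: "(\<forall>j<(2::nat). P j) \<longleftrightarrow> P 0 \<and> P 1" for P by (auto simp: less_2_cases_iff)
  show ?thesis unfolding mp_eq_def L entries ereal.inject by (simp add: add.commute)
qed
theorem mainTheorem20:
  fixes m :: nat and a b d :: "nat \<Rightarrow> real"
  shows "(\<forall>i\<in>{1..m}. \<forall>j\<in>{1..m}.
            mp_eq 2 (mp_mult 2 (upper2 (a i) (b i) (d i)) (upper2 (a j) (b j) (d j)))
                    (mp_mult 2 (upper2 (a j) (b j) (d j)) (upper2 (a i) (b i) (d i))))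
     \<longleftrightarrow>
     ((\<forall>i\<in>{1..m}. a i \<ge> d i) \<and>
        (\<exists>c::real. (\<forall>k\<in>{1..m}. a k > d k \<longrightarrow> c = b k - a k) \<and>
                   (\<forall>k\<in>{1..m}. a k = d k \<longrightarrow> c \<ge> b k - a k)))
     \<or> ((\<forall>i\<in>{1..m}. a i \<le> d i) \<and>
        (\<exists>c::real. (\<forall>k\<in>{1..m}. a k < d k \<longrightarrow> c = d k - b k) \<and>
                   (\<forall>k\<in>{1..m}. a k = d k \<longrightarrow> c \<le> d k - b k)))"
  (is "?L \<longleftrightarrow> ?A \<or> ?B")
proof
  assume H: ?L
  let ?C = "\<lambda>i j. max (a i + b j) (b i + d j) = max (a j + b i) (b j + d i)"
  have C: "?C i j" if "i \<in> {1..m}" "j \<in> {1..m}" for i j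
    using H that comm_iff by blast
  show "?A \<or> ?B"
  proof (cases "\<exists>i\<in>{1..m}. a i > d i")
    case True
    then obtain k0 where k0: "k0 \<in> {1..m}" "a k0 > d k0" by blast
    have ge: "\<forall>i\<in>{1..m}. a i \<ge> d i"
    proof (rule ccontr)
      assume "\<not> ?thesis"
      then obtain j where j: "j \<in> {1..m}" "a j < d j" by force
      from C[OF k0(1) j(1)] k0(2) j(2) show False by (auto simp: max_def split: if_splits)
    qed
    have "?A"
    proof (intro conjI ge exI[of _ "b k0 - a k0"] ballI impI)
      fix k assume k: "k \<in> {1..m}" "a k > d k"
      from C[OF k0(1) k(1)] k0(2) k(2) show "b k0 - a k0 = b k - a k"
        by (auto simp: max_def split: if_splits)
    next
      fix k assume k: "k \<in> {1..m}" "a k = d k"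
      from C[OF k0(1) k(1)] k0(2) k(2) show "b k0 - a k0 \<ge> b k - a k"
        by (auto simp: max_def split: if_splits)
    qed
    then show ?thesis ..
  next
    case F1: False
    show ?thesis
    proof (cases "\<exists>i\<in>{1..m}. a i < d i")
      case True
      then obtain k0 where k0: "k0 \<in> {1..m}" "a k0 < d k0" by blast
      have le: "\<forall>i\<in>{1..m}. a i \<le> d i" using F1 by force
      have "?B"
      proof (intro conjI le exI[of _ "d k0 - b k0"] ballI impI)
        fix k assume k: "k \<in> {1..m}" "a k < d k"
        from C[OF k0(1) k(1)] k0(2) k(2) show "d k0 - b k0 = d k - b k"
          by (auto simp: max_def split: if_splits)
      next
        fix k assume k: "k \<in> {1..m}" "a k = d k"
        from C[OF k0(1) k(1)] k0(2) k(2) show "d k0 - b k0 \<le> d k - b k"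
          by (auto simp: max_def split: if_splits)
      qed
      then show ?thesis ..
    next
      case False
      have ge: "\<forall>i\<in>{1..m}. a i \<ge> d i" using False by force
      define c where "c = Max (insert 0 ((\<lambda>k. b k - a k) ` {1..m}))"
      have "?A"
      proof (intro conjI ge exI[of _ c] ballI impI)
        fix k assume "k \<in> {1..m}" "a k > d k" then show "c = b k - a k" using F1 by blast
      next
        fix k assume "k \<in> {1..m}" then show "c \<ge> b k - a k"
          unfolding c_def by (intro Max_ge) auto
      qed
      then show ?thesis ..
    qed
  qed
next
  assume "?A \<or> ?B"
  then show ?L
  proof
    assume A: ?A
    then obtain c where c1: "\<forall>k\<in>{1..m}. a k > d k \<longrightarrow> c = b k - a k"
      and c2: "\<forall>k\<in>{1..m}. a k = d k \<longrightarrow> c \<ge> b k - a k" by blast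
    show ?L
    proof (intro ballI, unfold comm_iff)
      fix i j assume i: "i \<in> {1..m}" and j: "j \<in> {1..m}"
      have "a i \<ge> d i" "a j \<ge> d j" using A i j by auto
      moreover have "a i > d i \<longrightarrow> c = b i - a i" "a i = d i \<longrightarrow> c \<ge> b i - a i"
        "a j > d j \<longrightarrow> c = b j - a j" "a j = d j \<longrightarrow> c \<ge> b j - a j"
        using c1 c2 i j by auto
      ultimately show "max (a i + b j) (b i + d j) = max (a j + b i) (b j + d i)"
        by (cases "a i > d i"; cases "a j > d j"; auto simp: max_def)
    qed
  next
    assume B: ?B
    then obtain c where c1: "\<forall>k\<in>{1..m}. a k < d k \<longrightarrow> c = d k - b k"
      and c2: "\<forall>k\<in>{1..m}. a k = d k \<longrightarrow> c \<le> d k - b k" by blast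
    show ?L
    proof (intro ballI, unfold comm_iff)
      fix i j assume i: "i \<in> {1..m}" and j: "j \<in> {1..m}"
      have "a i \<le> d i" "a j \<le> d j" using B i j by auto
      moreover have "a i < d i \<longrightarrow> c = d i - b i" "a i = d i \<longrightarrow> c \<le> d i - b i"
        "a j < d j \<longrightarrow> c = d j - b j" "a j = d j \<longrightarrow> c \<le> d j - b j"
        using c1 c2 i j by auto
      ultimately show "max (a i + b j) (b i + d j) = max (a j + b i) (b j + d i)"
        by (cases "a i < d i"; cases "a j < d j"; auto simp: max_def)
    qed
  qed
qed

end
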